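(* Let $\alpha,\beta>0$ and $p,q\in(0,1)$. Let $N\sim\mathrm{NBin}(\alpha,p)$ and let $X_1,X_2,\dots$ be independent copies of $X\sim\mathrm{NBin}(\beta,q)$, independent of $N$, and let $L=X_1+\dots+X_N$. Then $a_n=\mathbb{P}[L=n]$ satisfies \[ a_n\sim C\, z_1^{-n} n^{\alpha-1}\qquad (n\to\infty), \] where \[ z_1=\frac{1-q(1-p)^{1/\beta}}{1-q},\qquad C=\frac{(pq)^{\alpha}(1-p)^{\alpha/\beta}}{\Gamma(\alpha)\,\beta^{\alpha}\,(1-q(1-p)^{1/\beta})^{\alpha}}. \]
   Context: $\mathrm{NBin}(\alpha,p)$ denotes the negative binomial distribution $\mathbb{P}[Y=n]=\binom{\alpha+n-1}{n}p^{\alpha}(1-p)^n$, $n\ge0$, with probability generating function $\left(\frac{p}{1-(1-p)z}\right)^{\alpha}$. Thus $L$ has probability generating function $\left(\frac{p}{1-(1-p)\left(\frac{q}{1-(1-q)z}\right)^{\beta}}\right)^{\alpha}$. *)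

theory Defs
  imports "HOL-Probability.Probability" "HOL-Library.Landau_Symbols"
begin

definition nbin :: "real \<Rightarrow> real \<Rightarrow> nat \<Rightarrow> real" where
  "nbin \<alpha> p n = ((\<alpha> + real n - 1) gchoose n) * p powr \<alpha> * (1 - p) ^ n"

fun iid_sum_pmf :: "nat pmf \<Rightarrow> nat \<Rightarrow> nat pmf" where
  "iid_sum_pmf X 0 = return_pmf 0"
| "iid_sum_pmf X (Suc k) =
     bind_pmf (iid_sum_pmf X k) (\<lambda>s. bind_pmf X (\<lambda>x. return_pmf (s + x)))"

definition random_sum_pmf :: "nat pmf \<Rightarrow> nat pmf \<Rightarrow> nat pmf" where
  "random_sum_pmf N X = bind_pmf N (iid_sum_pmf X)"

end

theory Submission
  imports Defs "HOL-Complex_Analysis.Complex_Analysis" "HOL-Real_Asymp.Real_Asymp"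
begin


lemma gchoose_neg: "((-a::real) gchoose n) = (-1)^n * ((a + real n - 1) gchoose n)"
  by (subst gbinomial_negated_upper) (simp add: algebra_simps)

lemma nbin_term: "((-a::real) gchoose n) * (-((1-p)*t))^n = ((a + real n - 1) gchoose n) * (1-p)^n * t^n"
proof -
  have "(-((1-p)*t))^n = (-1)^n * ((1-p)^n * t^n)"
    by (metis mult_minus1 power_mult_distrib)
  moreover have "(-1::real)^n * (-1)^n = 1" by (simp flip: power_mult_distrib)
  ultimately show ?thesis unfolding gchoose_neg
    by (metis (no_types, lifting) mult.assoc mult.commute mult.left_commute mult_1)
qed

lemma nbin_sums:
  fixes a p t :: real
  assumes "0 < p" "p < 1" "\<bar>(1-p)*t\<bar> < 1"
  shows "(\<lambda>n. nbin a p n * t^n) sums (p powr a * (1 - (1-p)*t) powr (-a))"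
proof -
  have "(\<lambda>n. ((-a) gchoose n) * (-((1-p)*t))^n) sums (1 + -((1-p)*t)) powr (-a)"
    by (rule gen_binomial_real) (use assms in simp)
  then have "(\<lambda>n. ((a + real n - 1) gchoose n) * (1-p)^n * t^n) sums (1 - (1-p)*t) powr (-a)"
    unfolding nbin_term by simp
  from sums_mult[OF this, of "p powr a"] show ?thesis
    unfolding nbin_def by (simp add: mult_ac)
qed

definition gf :: "nat pmf \<Rightarrow> real \<Rightarrow> ennreal" where
  "gf Y x = (\<integral>\<^sup>+n. ennreal (x^n) \<partial>measure_pmf Y)"

lemma gf_sum: "gf Y x = (\<Sum>n. ennreal (pmf Y n * x^n))" if "x \<ge> 0"
  unfolding gf_def nn_integral_measure_pmf nn_integral_count_space_nat
  using that by (simp add: ennreal_mult')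

lemma gf_iid: assumes "x \<ge> 0" shows "gf (iid_sum_pmf X k) x = gf X x ^ k"
proof (induction k)
  case 0 then show ?case by (simp add: gf_def)
next
  case (Suc k)
  have "gf (iid_sum_pmf X (Suc k)) x =
     (\<integral>\<^sup>+s. (\<integral>\<^sup>+y. ennreal (x^(s+y)) \<partial>measure_pmf X) \<partial>measure_pmf (iid_sum_pmf X k))"
    using assms by (simp add: gf_def)
  also have "\<dots> = (\<integral>\<^sup>+s. ennreal (x^s) * gf X x \<partial>measure_pmf (iid_sum_pmf X k))"
    using assms by (simp add: gf_def power_add ennreal_mult' nn_integral_cmult)
  also have "\<dots> = gf (iid_sum_pmf X k) x * gf X x"
    by (simp add: gf_def nn_integral_multc)
  finally show ?case using Suc by (simp add: mult.commute)
qed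

lemma gf_random_sum: assumes "x \<ge> 0"
  shows "gf (random_sum_pmf N X) x = (\<integral>\<^sup>+k. gf X x ^ k \<partial>measure_pmf N)"
proof -
  have "gf (random_sum_pmf N X) x = (\<integral>\<^sup>+k. gf (iid_sum_pmf X k) x \<partial>measure_pmf N)"
    unfolding random_sum_pmf_def gf_def by simp
  then show ?thesis using gf_iid[OF assms] by simp
qed

lemma gf_real_sums:
  assumes "x \<ge> 0" "V \<ge> 0" "gf Y x = ennreal V"
  shows "(\<lambda>n. pmf Y n * x^n) sums V"
proof -
  have "(\<lambda>n. ennreal (pmf Y n * x^n)) sums (\<Sum>n. ennreal (pmf Y n * x^n))"
    by (rule summable_sums[OF summableI])
  then have "(\<lambda>n. ennreal (pmf Y n * x^n)) sums ennreal V"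
    using assms gf_sum by simp
  then show ?thesis using assms by (subst (asm) sums_ennreal) auto
qed

lemma gf_of_real_sums:
  assumes "x \<ge> 0" "(\<lambda>n. pmf Y n * x^n) sums V"
  shows "gf Y x = ennreal V"
proof -
  have "(\<lambda>n. ennreal (pmf Y n * x^n)) sums ennreal V"
  proof -
    have "0 \<le> V" by (rule sums_le[OF _ sums_zero assms(2)]) (use assms in simp)
    then show ?thesis using assms by (subst sums_ennreal) auto
  qed
  then show ?thesis using gf_sum[OF assms(1)] sums_unique by metis
qed

lemma L_gf:
  fixes \<alpha> \<beta> p q x :: real and N X :: "nat pmf"
  assumes "\<alpha> > 0" and "\<beta> > 0"
    and "0 < p" and "p < 1" and "0 < q" and "q < 1"
    and "\<And>n. pmf N n = nbin \<alpha> p n"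
    and "\<And>n. pmf X n = nbin \<beta> q n"
    and x: "0 \<le> x" "x < 1"
  shows "(\<lambda>n. pmf (random_sum_pmf N X) n * x^n) sums
     (p powr \<alpha> * (1 - (1-p) * (q powr \<beta> * (1-(1-q)*x) powr (-\<beta>))) powr (-\<alpha>))"
proof -
  define H where "H = q powr \<beta> * (1-(1-q)*x) powr (-\<beta>)"
  have H0: "H \<ge> 0" unfolding H_def by simp
  have qx: "(1-q)*x \<le> 1-q" by (rule mult_left_le) (use x assms in auto)
  then have "q \<le> 1-(1-q)*x" by simp
  then have "(1-(1-q)*x) powr (-\<beta>) \<le> q powr (-\<beta>)"
    using assms by (intro powr_mono2') auto
  then have "H \<le> q powr \<beta> * q powr (-\<beta>)" unfolding H_def using assms
    by (intro mult_left_mono) auto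
  moreover have "q powr \<beta> * q powr (-\<beta>) = 1" using assms by (simp flip: powr_add)
  ultimately have H1: "H \<le> 1" by simp
  have "(1-q)*x \<le> x" by (rule mult_left_le_one_le) (use x assms in auto)
  then have qx1: "\<bar>(1-q)*x\<bar> < 1" using x assms by simp
  have "(\<lambda>n. pmf X n * x^n) sums H"
    unfolding assms(8) H_def by (rule nbin_sums) (use assms x qx1 in auto)
  then have gX: "gf X x = ennreal H" using gf_of_real_sums x by blast
  have "(\<lambda>k. pmf N k * H^k) sums (p powr \<alpha> * (1 - (1-p)*H) powr (-\<alpha>))"
    unfolding assms(7)
  proof (rule nbin_sums)
    have "(1-p)*H \<le> (1-p)*1" using H1 assms by (intro mult_left_mono) auto
    moreover have "0 \<le> (1-p)*H" using H0 assms by simp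
    moreover have "(1-p)*1 < 1" using assms by simp
    ultimately have "(1-p)*H < 1" by linarith
    then show "\<bar>(1-p)*H\<bar> < 1" using \<open>0 \<le> (1-p)*H\<close> by (simp only: abs_of_nonneg)
  qed (use assms in auto)
  then have "gf N H = ennreal (p powr \<alpha> * (1 - (1-p)*H) powr (-\<alpha>))"
    using gf_of_real_sums H0 by blast
  moreover have "gf (random_sum_pmf N X) x = (\<integral>\<^sup>+k. ennreal H ^ k \<partial>measure_pmf N)"
    by (simp add: gf_random_sum x gX)
  moreover have "\<dots> = gf N H" by (simp add: gf_def ennreal_power H0)
  ultimately show ?thesis unfolding H_def[symmetric]
    by (intro gf_real_sums) (use x in auto)
qed



lemma geom_poly_summable:
  fixes \<theta> s :: real assumes "0 < \<theta>" "\<theta> < 1"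
  shows "summable (\<lambda>k::nat. (real k + 1) powr s * \<theta>^k)"
proof -
  define \<theta>2 where "\<theta>2 = (1+\<theta>)/2"
  have t2: "0 < \<theta>/\<theta>2" "\<theta>/\<theta>2 < 1" "0 < \<theta>2" "\<theta>2 < 1" using assms by (auto simp: \<theta>2_def field_simps)
  have "(\<lambda>k::nat. (real k + 1) powr s * (\<theta>/\<theta>2)^k) \<longlonglongrightarrow> 0"
    using t2 by real_asymp
  then have "Bseq (\<lambda>k::nat. (real k + 1) powr s * (\<theta>/\<theta>2)^k)"
    by (intro convergent_imp_Bseq convergentI)
  then obtain D where D: "\<And>k. norm ((real k + 1) powr s * (\<theta>/\<theta>2)^k) \<le> D"
    by (elim BseqE) blast
  show ?thesis
  proof (rule summable_comparison_test)
    show "summable (\<lambda>k. D * \<theta>2^k)" using t2 by simp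
    show "\<exists>N. \<forall>n\<ge>N. norm ((real n + 1) powr s * \<theta> ^ n) \<le> D * \<theta>2 ^ n"
    proof (intro exI allI impI)
      fix n :: nat
      have "(real n + 1) powr s * \<theta> ^ n = ((real n + 1) powr s * (\<theta>/\<theta>2)^n) * \<theta>2^n"
        using t2 by (simp add: power_divide)
      also have "norm \<dots> \<le> D * \<theta>2^n"
        using D[of n] t2 by (simp add: abs_mult mult_right_mono)
      finally show "norm ((real n + 1) powr s * \<theta> ^ n) \<le> D * \<theta>2 ^ n" .
    qed
  qed
qed

lemma ratio_powr_le:
  fixes k n :: nat and e :: real assumes "k \<le> n"
  shows "((real n + 1) / (real (n - k) + 1)) powr e \<le> (real k + 1) powr \<bar>e\<bar>"
proof -
  define y where "y = (real n + 1) / (real (n - k) + 1)"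
  have y1: "1 \<le> y" using assms by (simp add: y_def field_simps)
  have "real n + 1 \<le> (real k + 1) * (real (n - k) + 1)"
    using assms by (simp add: of_nat_diff algebra_simps mult_left_mono)
  then have yk: "y \<le> real k + 1" by (simp add: y_def field_simps)
  have "y powr e \<le> y powr \<bar>e\<bar>" using y1 by (intro powr_mono) auto
  also have "\<dots> \<le> (real k + 1) powr \<bar>e\<bar>" using y1 yk by (intro powr_mono2) auto
  finally show ?thesis by (simp add: y_def)
qed

lemma conv_asym:
  fixes \<phi> :: "nat \<Rightarrow> complex" and bt :: "nat \<Rightarrow> real" and e g C \<theta> :: real
  assumes bt: "bt \<longlonglongrightarrow> g" and \<phi>b: "\<And>k. norm (\<phi> k) \<le> C * \<theta>^k" and \<theta>: "0<\<theta>" "\<theta><1"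
  shows "(\<lambda>n. \<Sum>k\<le>n. \<phi> k * of_real (bt (n-k) * ((real n + 1)/(real (n-k) + 1)) powr e))
           \<longlonglongrightarrow> (\<Sum>k. \<phi> k) * of_real g"
proof -
  define a where "a k n = (if k \<le> n then \<phi> k * of_real (bt (n-k) * ((real n+1)/(real (n-k)+1)) powr e) else 0)" for k n
  have "Bseq bt" by (intro convergent_imp_Bseq convergentI) (rule bt)
  then obtain B where B: "B > 0" "\<And>m. \<bar>bt m\<bar> \<le> B" by (elim BseqE) auto
  define M where "M k = (C * B) * ((real k + 1) powr \<bar>e\<bar> * \<theta>^k)" for k
  have lim: "(\<lambda>n. a k n) \<longlonglongrightarrow> \<phi> k * of_real g" for k
  proof -
    have "(\<lambda>n. bt (n-k)) \<longlonglongrightarrow> g"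
      by (rule filterlim_compose[OF bt filterlim_minus_const_nat_at_top])
    moreover have "(\<lambda>n. ((real n+1)/(real n - real k+1)) powr e) \<longlonglongrightarrow> 1"
      by real_asymp
    then have "(\<lambda>n. ((real n+1)/(real (n-k)+1)) powr e) \<longlonglongrightarrow> 1"
      by (rule Lim_transform_eventually)
         (use eventually_ge_at_top[of k] in \<open>eventually_elim, simp add: of_nat_diff\<close>)
    ultimately have "(\<lambda>n. \<phi> k * of_real (bt (n-k) * ((real n+1)/(real (n-k)+1)) powr e))
        \<longlonglongrightarrow> \<phi> k * of_real (g * 1)"
      by (intro tendsto_intros)
    then have X: "(\<lambda>n. \<phi> k * of_real (bt (n-k) * ((real n+1)/(real (n-k)+1)) powr e))
        \<longlonglongrightarrow> \<phi> k * of_real g" by simp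
    show ?thesis
      by (rule Lim_transform_eventually[OF X])
         (use eventually_ge_at_top[of k] in \<open>eventually_elim, simp add: a_def\<close>)
  qed
  have C0: "0 \<le> C" using \<phi>b[of 0] norm_ge_zero[of "\<phi> 0"] by (simp del: norm_ge_zero)
  have bound: "norm (a k n) \<le> M k" for k n
  proof (cases "k \<le> n")
    case True
    have "norm (a k n) = norm (\<phi> k) * (\<bar>bt (n-k)\<bar> * ((real n+1)/(real (n-k)+1)) powr e)"
      using True by (simp add: a_def norm_mult abs_mult)
    also have "\<dots> \<le> (C * \<theta>^k) * (B * (real k + 1) powr \<bar>e\<bar>)"
      by (intro mult_mono \<phi>b B ratio_powr_le True) (use B C0 \<theta> in auto)
    finally show ?thesis by (simp add: M_def mult_ac)
  next
    case False
    have "0 \<le> M k" unfolding M_def using C0 B \<theta> by (intro mult_nonneg_nonneg) auto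
    then show ?thesis using False by (simp add: a_def)
  qed
  have sM: "summable M" unfolding M_def
    by (intro summable_mult geom_poly_summable \<theta>)
  have "eventually (\<lambda>n. summable (\<lambda>k. norm (a k n))) sequentially \<and>
           summable (\<lambda>k. norm (\<phi> k * of_real g)) \<and>
           ((\<lambda>n. suminf (\<lambda>k. a k n)) \<longlonglongrightarrow> suminf (\<lambda>k. \<phi> k * of_real g))"
    by (rule tannerys_theorem[OF lim _ sM]) (auto intro: always_eventually bound)
  then have T: "(\<lambda>n. suminf (\<lambda>k. a k n)) \<longlonglongrightarrow> suminf (\<lambda>k. \<phi> k * of_real g)" by blast
  have sphi: "summable \<phi>"
    by (rule summable_comparison_test[of _ "\<lambda>k. C * \<theta>^k"]) (use \<phi>b \<theta> in auto)
  have "suminf (\<lambda>k. \<phi> k * of_real g) = (\<Sum>k. \<phi> k) * of_real g"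
    by (rule suminf_mult2[symmetric, OF sphi])
  moreover have "suminf (\<lambda>k. a k n) = (\<Sum>k\<le>n. \<phi> k * of_real (bt (n-k) * ((real n + 1)/(real (n-k) + 1)) powr e))" for n
    by (subst suminf_finite[of "{..n}"]) (auto simp: a_def)
  ultimately show ?thesis using T by simp
qed



lemma gb_asym:
  fixes \<alpha> :: real assumes "\<alpha> > 0"
  shows "(\<lambda>m. ((\<alpha> + real m - 1) gchoose m) * (real m + 1) powr (1-\<alpha>)) \<longlonglongrightarrow> 1 / Gamma \<alpha>"
proof -
  have "(\<lambda>m. (((\<alpha> - 1) + of_nat m) gchoose m) * exp (-(\<alpha>-1) * of_real (ln (of_nat m)))) \<longlonglongrightarrow> rGamma ((\<alpha> - 1)+1)"
    by (rule Gamma_gbinomial)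
  then have A: "(\<lambda>m. ((\<alpha> + real m - 1) gchoose m) * exp (-(\<alpha>-1) * ln (real m))) \<longlonglongrightarrow> 1 / Gamma \<alpha>"
    by (simp add: rGamma_inverse_Gamma field_simps)
  have B: "(\<lambda>m. ((real m + 1) / real m) powr (1-\<alpha>)) \<longlonglongrightarrow> 1" by real_asymp
  have L: "(\<lambda>m. ((\<alpha> + real m - 1) gchoose m) * exp (-(\<alpha>-1) * ln (real m)) * ((real m + 1) / real m) powr (1-\<alpha>))
         \<longlonglongrightarrow> 1 / Gamma \<alpha> * 1"
    by (intro tendsto_intros A B)
  have E: "\<forall>\<^sub>F m in sequentially. ((\<alpha> + real m - 1) gchoose m) * exp (-(\<alpha>-1) * ln (real m)) * ((real m + 1) / real m) powr (1-\<alpha>) =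
       ((\<alpha> + real m - 1) gchoose m) * (real m + 1) powr (1-\<alpha>)"
    using eventually_gt_at_top[of "0::nat"]
  proof eventually_elim
    case (elim m)
    have "exp (-(\<alpha>-1) * ln (real m)) = real m powr (1-\<alpha>)"
      using elim by (simp add: powr_def algebra_simps)
    moreover have "real m powr (1-\<alpha>) * ((real m + 1) / real m) powr (1-\<alpha>) = (real m + 1) powr (1-\<alpha>)"
      using elim by (simp add: powr_mult[symmetric])
    ultimately show ?case by (simp add: mult.assoc)
  qed
  show ?thesis using Lim_transform_eventually[OF L E] by simp
qed

lemma powser_unique_real:
  fixes d :: "nat \<Rightarrow> complex" and r :: real
  assumes r: "r > 0" and S: "\<And>x. 0 < x \<Longrightarrow> x < r \<Longrightarrow> (\<lambda>n. d n * of_real x ^ n) sums 0"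
  shows "d n = 0"
proof (induction n rule: less_induct)
  case (less m)
  define e where "e j = d (j + m)" for j
  have sumz: "(\<lambda>j. e j * of_real x ^ j) sums 0" if x: "0 < x" "x < r" for x
  proof -
    have "(\<lambda>n. d (n + m) * of_real x ^ (n + m)) sums 0"
    proof -
      have "(\<lambda>n. d n * of_real x ^ n) sums 0" by (rule S[OF x])
      moreover have "(\<Sum>n<m. d n * of_real x ^ n) = 0" using less by simp
      ultimately show ?thesis using sums_split_initial_segment[of "\<lambda>n. d n * of_real x ^ n" 0 m] by simp
    qed
    then have "(\<lambda>n. (d (n + m) * of_real x ^ n) * of_real x ^ m) sums 0"
      by (simp add: power_add mult_ac)
    then have "(\<lambda>n. e n * of_real x ^ n * of_real x ^ m) sums (0 * of_real x ^ m)"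
      by (simp add: e_def)
    then show ?thesis using x by (subst (asm) sums_mult2_iff) auto
  qed
  define f where "f y = (\<Sum>j. e j * y ^ j)" for y :: complex
  have fs: "(\<lambda>j. e j * y ^ j) sums f y" if "norm y < r" for y
  proof -
    define t where "t = (norm y + r)/2"
    have "0 \<le> norm y" by simp
    have t1: "0 < t" using add_nonneg_pos[OF norm_ge_zero[of y] r] unfolding t_def by simp
    have t2: "t < r" using that unfolding t_def by (auto simp: field_simps)
    have t3: "norm y < t" using that unfolding t_def by (auto simp: field_simps)
    note t = t1 t2 t3
    have "summable (\<lambda>j. e j * of_real t ^ j)"
      using sumz[OF t(1,2)] by (rule sums_summable)
    moreover have "norm y < norm (complex_of_real t)" using t by simp
    ultimately have "summable (\<lambda>j. e j * y ^ j)"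
      by (rule powser_inside)
    then show ?thesis by (simp add: f_def summable_sums)
  qed
  have "(f \<longlongrightarrow> e 0) (at 0)" by (rule powser_limit_0[OF r fs])
  moreover have "filterlim (\<lambda>x::real. complex_of_real x) (at 0) (at_right 0)"
  proof (rule filterlim_atI)
    have "((\<lambda>x::real. x) \<longlongrightarrow> 0) (at_right 0)" by (rule tendsto_ident_at)
    then show "((\<lambda>x::real. complex_of_real x) \<longlongrightarrow> 0) (at_right 0)"
      using tendsto_of_real by fastforce
    show "\<forall>\<^sub>F x in at_right 0. complex_of_real x \<noteq> 0"
      using eventually_at_right_less[of "0::real"] by eventually_elim auto
  qed
  ultimately have "((\<lambda>x. f (of_real x)) \<longlongrightarrow> e 0) (at_right 0)" by (rule filterlim_compose)
  moreover have "eventually (\<lambda>x. f (of_real x) = 0) (at_right (0::real))"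
    unfolding eventually_at_right_field
  proof (intro exI[of _ r] conjI allI impI)
    fix x :: real assume "0 < x"
    assume xr: "x < r"
    have n: "norm (complex_of_real x) < r" using \<open>0 < x\<close> xr by simp
    show "f (of_real x) = 0" using sums_unique2[OF fs[OF n] sumz[OF \<open>0 < x\<close> xr]] by simp
  qed (use r in auto)
  ultimately have "((\<lambda>x. 0) \<longlongrightarrow> e 0) (at_right (0::real))"
    by (rule Lim_transform_eventually)
  then have "e 0 = 0" using tendsto_unique[OF _ _ tendsto_const] by (metis trivial_limit_at_right_real)
  then show ?case by (simp add: e_def)
qed



locale PS =
  fixes \<alpha> \<beta> p q :: real
  assumes \<alpha>: "\<alpha> > 0" and \<beta>: "\<beta> > 0" and p: "0 < p" "p < 1" and q: "0 < q" "q < 1"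
begin

definition "c = q * (1-p) powr (1/\<beta>)"
definition "z1 = (1-c)/(1-q)"
definition "k = (1-p) * q powr \<beta>"
definition "Az z = 1 - complex_of_real (1-q) * z"
definition "Dz z = 1 - complex_of_real k * exp (- complex_of_real \<beta> * Ln (Az z))"
definition "Q z = (if z = complex_of_real z1 then deriv Dz (complex_of_real z1)
                   else (Dz z - Dz (complex_of_real z1)) / (z - complex_of_real z1))"
definition "Fz z = - complex_of_real z1 * Q z"
definition "Phi z = exp (- complex_of_real \<alpha> * Ln (Fz z))"
definition "U = ball (0::complex) (1/(1-q))"

lemma c_pos: "0 < c" and c_lt_q: "c < q"
proof -
  have "(1-p) powr (1/\<beta>) < 1 powr (1/\<beta>)" using p \<beta> by (intro powr_less_mono2) auto
  then have "(1-p) powr (1/\<beta>) < 1" by simp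
  then show "c < q" unfolding c_def using q by simp
  show "0 < c" unfolding c_def using p q by simp
qed

lemma z1_gt1: "1 < z1" and z1_lt: "z1 < 1/(1-q)" and z1_pos: "0 < z1"
  using c_pos c_lt_q q by (auto simp: z1_def field_simps)

lemma k_pos: "0 < k" using p q by (simp add: k_def)

lemma kc: "k * c powr (-\<beta>) = 1"
proof -
  have "c powr \<beta> = q powr \<beta> * ((1-p) powr (1/\<beta>)) powr \<beta>"
    unfolding c_def using p q by (simp add: powr_mult)
  also have "((1-p) powr (1/\<beta>)) powr \<beta> = 1 - p" using \<beta> p by (simp add: powr_powr)
  finally have "c powr \<beta> = k" by (simp add: k_def mult.commute)
  then show ?thesis using c_pos k_pos by (simp add: powr_minus)
qed

lemma Re_Az: "z \<in> U \<Longrightarrow> Re (Az z) > 0"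
proof -
  assume "z \<in> U"
  then have "norm z < 1/(1-q)" by (simp add: U_def)
  moreover have "Re z \<le> norm z" by (rule complex_Re_le_cmod)
  then have "(1-q) * Re z \<le> (1-q) * norm z" using q by (intro mult_left_mono) auto
  moreover have "(1-q) * norm z < 1" using \<open>norm z < 1/(1-q)\<close> q by (simp add: field_simps)
  ultimately have "(1-q) * Re z < 1" by linarith
  then show ?thesis by (simp add: Az_def)
qed

lemma Az_notin: "z \<in> U \<Longrightarrow> Az z \<notin> \<real>\<^sub>\<le>\<^sub>0"
proof -
  assume "z \<in> U"
  then have "Re (Az z) > 0" by (rule Re_Az)
  then show ?thesis by (simp add: complex_nonpos_Reals_iff)
qed

lemma open_U: "open U" by (simp add: U_def)

lemma z1_in_U: "complex_of_real z1 \<in> U"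
  using z1_lt z1_pos by (simp add: U_def)

lemma Dz_holo: "Dz holomorphic_on U"
proof -
  have Ahol: "Az holomorphic_on U" unfolding Az_def by (intro holomorphic_intros)
  show ?thesis unfolding Dz_def using Ahol Az_notin by (intro holomorphic_intros) blast+
qed

lemma Az_real: "Az (complex_of_real x) = complex_of_real (1 - (1-q)*x)"
  by (simp add: Az_def)

lemma Dz_real:
  assumes "(1-q)*x < 1"
  shows "Dz (complex_of_real x) = complex_of_real (1 - k * (1 - (1-q)*x) powr (-\<beta>))"
proof -
  have "Ln (Az (complex_of_real x)) = complex_of_real (ln (1 - (1-q)*x))"
    unfolding Az_real by (rule Ln_of_real) (use assms in simp)
  then show ?thesis unfolding Dz_def using assms
    by (simp add: powr_def exp_of_real[symmetric])
qed

lemma Az_z1: "1 - (1-q)*z1 = c"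
  using q by (simp add: z1_def)

lemma Dz_z1: "Dz (complex_of_real z1) = 0"
proof -
  have "(1-q)*z1 < 1" using Az_z1 c_pos by linarith
  then show ?thesis using Dz_real Az_z1 kc by (simp flip: of_real_mult)
qed

lemma Az_deriv: "(Az has_field_derivative - complex_of_real (1-q)) (at z)"
  unfolding Az_def by (auto intro!: derivative_eq_intros)

lemma Dz_has_deriv:
  assumes "z \<in> U"
  shows "(Dz has_field_derivative - (complex_of_real k * exp (- complex_of_real \<beta> * Ln (Az z)) * (complex_of_real \<beta> * complex_of_real (1-q) / Az z))) (at z)"
proof -
  have nz: "Az z \<noteq> 0" using Re_Az[OF assms] by auto
  show ?thesis unfolding Dz_def
    apply (rule derivative_eq_intros refl)+
          apply (rule Az_notin[OF assms])
         apply (rule Az_deriv)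
        apply (rule refl)+
    using nz by (simp add: field_simps)
qed

lemma Dz_deriv: "deriv Dz (complex_of_real z1) = - complex_of_real (\<beta>*(1-q)/c)"
proof -
  have Az1: "Az (complex_of_real z1) = complex_of_real c"
    using Az_z1 by (simp add: Az_real)
  have "deriv Dz (complex_of_real z1) = - (complex_of_real k * exp (- complex_of_real \<beta> * Ln (complex_of_real c)) * (complex_of_real \<beta> * complex_of_real (1-q) / complex_of_real c))"
    using DERIV_imp_deriv[OF Dz_has_deriv[OF z1_in_U]] unfolding Az1 .
  also have "exp (- complex_of_real \<beta> * Ln (complex_of_real c)) = complex_of_real (c powr (-\<beta>))"
    using c_pos by (simp add: Ln_of_real powr_def exp_of_real[symmetric])
  finally have "deriv Dz (complex_of_real z1) = - complex_of_real ((k * c powr (-\<beta>)) * (\<beta> * (1-q) / c))"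
    by (simp add: mult_ac)
  then show ?thesis using kc by simp
qed
lemma Q_holo: "Q holomorphic_on U"
  unfolding Q_def by (rule pole_lemma[OF Dz_holo]) (use open_U z1_in_U interior_open in auto)

lemma Fz_holo: "Fz holomorphic_on U"
  unfolding Fz_def using Q_holo by (intro holomorphic_intros)

definition "F1 = z1 * \<beta> * (1-q) / c"

lemma F1_pos: "F1 > 0" using z1_pos \<beta> q c_pos by (simp add: F1_def)

lemma Fz_z1: "Fz (complex_of_real z1) = complex_of_real F1"
  by (simp add: Fz_def Q_def Dz_deriv F1_def)

lemma Fz_other:
  assumes "z \<noteq> complex_of_real z1"
  shows "Fz z = Dz z / (1 - z / complex_of_real z1)"
proof -
  have z1: "complex_of_real z1 \<noteq> 0" using z1_pos by simp
  have "z - complex_of_real z1 \<noteq> 0" using assms by simp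
  then show ?thesis using assms z1 by (simp add: Fz_def Q_def Dz_z1 field_simps)
qed

lemma Fz_good:
  assumes "z \<in> cball 0 z1"
  shows "Fz z \<notin> \<real>\<^sub>\<le>\<^sub>0"
proof (cases "z = complex_of_real z1")
  case True
  then show ?thesis using Fz_z1 F1_pos by (simp add: complex_nonpos_Reals_iff)
next
  case False
  have nz: "norm z \<le> z1" using assms by simp
  have Rez: "Re z < z1"
  proof (rule ccontr)
    assume "\<not> Re z < z1"
    moreover have "Re z \<le> z1" using complex_Re_le_cmod[of z] nz by linarith
    ultimately have R: "Re z = z1" by simp
    have "(Re z)^2 + (Im z)^2 = (norm z)^2" by (simp add: cmod_power2)
    also have "\<dots> \<le> z1^2" using nz by (simp add: power_mono)
    finally have "(Im z)^2 \<le> 0" using R by simp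
    then have "Im z = 0" by simp
    then have "z = complex_of_real z1" using R by (simp add: complex_eq_iff)
    then show False using False by simp
  qed
  have zU: "z \<in> U" using nz z1_lt by (simp add: U_def)
  have ReA: "Re (Az z) > c"
  proof -
    have "(1-q) * Re z < (1-q) * z1" using Rez q by simp
    then show ?thesis using Az_z1 by (simp add: Az_def)
  qed
  have nA: "norm (Az z) > c" using ReA complex_Re_le_cmod[of "Az z"] by linarith
  have Anz: "Az z \<noteq> 0" using nA c_pos by auto
  have "norm (exp (- complex_of_real \<beta> * Ln (Az z))) = exp (- \<beta> * ln (norm (Az z)))"
    using Anz by simp
  also have "\<dots> < exp (- \<beta> * ln c)"
    using nA c_pos \<beta> less_trans[OF c_pos nA] by simp
  also have "\<dots> = c powr (-\<beta>)" using c_pos by (simp add: powr_def)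
  finally have "k * norm (exp (- complex_of_real \<beta> * Ln (Az z))) < k * c powr (-\<beta>)"
    using k_pos by simp
  then have kE: "norm (complex_of_real k * exp (- complex_of_real \<beta> * Ln (Az z))) < 1"
    using kc k_pos by (simp add: norm_mult)
  have ReD: "Re (Dz z) > 0"
  proof -
    have "Re (complex_of_real k * exp (- complex_of_real \<beta> * Ln (Az z))) < 1"
      using complex_Re_le_cmod kE le_less_trans by blast
    then show ?thesis by (simp add: Dz_def)
  qed
  show ?thesis
  proof
    assume "Fz z \<in> \<real>\<^sub>\<le>\<^sub>0"
    then obtain t where t: "Fz z = complex_of_real t" "t \<le> 0"
      by (metis complex_nonpos_Reals_iff complex_eq_iff Re_complex_of_real Im_complex_of_real)
    have w: "1 - z / complex_of_real z1 \<noteq> 0" using False z1_pos by (auto simp: field_simps)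
    have "Dz z = complex_of_real t * (1 - z / complex_of_real z1)"
      using Fz_other[OF False] t(1) w by (simp add: field_simps)
    then have "Re (Dz z) = t * (1 - Re z / z1)" by simp
    moreover have "0 < 1 - Re z / z1" using Rez z1_pos by (simp add: field_simps)
    ultimately have "Re (Dz z) \<le> 0" using t(2) by (simp add: mult_nonpos_nonneg)
    then show False using ReD by simp
  qed
qed

lemma exists_R:
  obtains R where "z1 < R" "ball 0 R \<subseteq> U" "\<And>z. z \<in> ball 0 R \<Longrightarrow> Fz z \<notin> \<real>\<^sub>\<le>\<^sub>0"
proof -
  define B where "B = U \<inter> Fz -` (- \<real>\<^sub>\<le>\<^sub>0)"
  have "open B" unfolding B_def
    by (rule continuous_open_preimage) (use Fz_holo holomorphic_on_imp_continuous_on open_U in auto)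
  moreover have "cball 0 z1 \<subseteq> B"
  proof
    fix z :: complex assume z: "z \<in> cball 0 z1"
    then have "z \<in> U" using z1_lt by (simp add: U_def)
    then show "z \<in> B" using Fz_good[OF z] by (simp add: B_def)
  qed
  ultimately obtain \<epsilon> where e: "\<epsilon> > 0" "(\<Union>x\<in>cball 0 z1. ball x \<epsilon>) \<subseteq> B"
    using compact_subset_open_imp_ball_epsilon_subset[OF compact_cball] by blast
  have sub: "ball 0 (z1 + \<epsilon>) \<subseteq> B"
  proof
    fix w :: complex assume w: "w \<in> ball 0 (z1 + \<epsilon>)"
    show "w \<in> B"
    proof (cases "norm w \<le> z1")
      case True
      then have "w \<in> (\<Union>x\<in>cball 0 z1. ball x \<epsilon>)" using e(1) by (auto intro!: bexI[of _ w])
      then show ?thesis using e(2) by blast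
    next
      case False
      define x where "x = complex_of_real (z1 / norm w) * w"
      have nw: "norm w > 0" using False z1_pos by linarith
      have nx: "norm x = z1" unfolding x_def norm_mult norm_of_real using nw z1_pos by simp
      have wx: "w - x = complex_of_real (1 - z1 / norm w) * w" by (simp add: x_def algebra_simps)
      have "dist x w = \<bar>1 - z1 / norm w\<bar> * norm w"
        unfolding dist_norm norm_minus_commute[of x] wx norm_mult norm_of_real ..
      also have "\<dots> = norm w - z1" using nw False by (simp add: field_simps abs_of_nonneg)
      also have "\<dots> < \<epsilon>" using w by simp
      finally have "w \<in> ball x \<epsilon>" by simp
      moreover have "x \<in> cball 0 z1" using nx by simp
      ultimately have "w \<in> (\<Union>x\<in>cball 0 z1. ball x \<epsilon>)" by auto
      then show ?thesis using e(2) by blast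
    qed
  qed
  show ?thesis
  proof (rule that[of "z1 + \<epsilon>"])
    show "z1 < z1 + \<epsilon>" using e by simp
    show "ball 0 (z1 + \<epsilon>) \<subseteq> U" using sub by (auto simp: B_def)
    show "Fz z \<notin> \<real>\<^sub>\<le>\<^sub>0" if "z \<in> ball 0 (z1 + \<epsilon>)" for z using sub that by (auto simp: B_def)
  qed
qed

lemma Phi_holo:
  assumes "ball 0 R \<subseteq> U" "\<And>z. z \<in> ball 0 R \<Longrightarrow> Fz z \<notin> \<real>\<^sub>\<le>\<^sub>0"
  shows "Phi holomorphic_on ball 0 R"
proof -
  have "Fz holomorphic_on ball 0 R" using Fz_holo assms(1) by (rule holomorphic_on_subset)
  then show ?thesis unfolding Phi_def using assms(2) by (intro holomorphic_intros) blast+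
qed

definition "Dr x = 1 - k * (1 - (1-q)*x) powr (-\<beta>)"

lemma Dr_pos:
  assumes "0 \<le> x" "x < z1"
  shows "Dr x > 0"
proof -
  have "(1-q)*x < (1-q)*z1" using assms q by simp
  then have c1: "c < 1 - (1-q)*x" using Az_z1 by linarith
  then have "(1 - (1-q)*x) powr (-\<beta>) < c powr (-\<beta>)"
    using c_pos \<beta> by (intro powr_less_mono2_neg) auto
  then have "k * (1 - (1-q)*x) powr (-\<beta>) < k * c powr (-\<beta>)" using k_pos by simp
  then show ?thesis using kc by (simp add: Dr_def)
qed

lemma Fz_real:
  assumes "0 \<le> x" "x < z1"
  shows "Fz (complex_of_real x) = complex_of_real (Dr x / (1 - x/z1))"
proof -
  have "(1-q)*x < (1-q)*z1" using assms q by simp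
  then have "(1-q)*x < 1" using Az_z1 c_pos by linarith
  then have "Dz (complex_of_real x) = complex_of_real (Dr x)" by (simp add: Dz_real Dr_def)
  moreover have "complex_of_real x \<noteq> complex_of_real z1" using assms by simp
  ultimately show ?thesis using Fz_other by simp
qed

lemma Phi_real:
  assumes "0 \<le> x" "x < z1"
  shows "Phi (complex_of_real x) = complex_of_real ((Dr x / (1 - x/z1)) powr (-\<alpha>))"
proof -
  have pos: "0 < Dr x / (1 - x/z1)" using Dr_pos[OF assms] assms z1_pos by (simp add: field_simps)
  show ?thesis unfolding Phi_def Fz_real[OF assms] Ln_of_real[OF pos] using pos Dr_pos[OF assms] assms
    by (simp add: powr_def exp_of_real[symmetric])
qed

lemma Phi_z1: "Phi (complex_of_real z1) = complex_of_real (F1 powr (-\<alpha>))"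
  unfolding Phi_def Fz_z1 using F1_pos by (simp add: Ln_of_real powr_def exp_of_real[symmetric])

end


lemma gen_term: "((-a::real) gchoose n) * (-(u*t))^n = ((a + real n - 1) gchoose n) * u^n * t^n"
proof -
  have "(-(u*t))^n = (-1)^n * (u^n * t^n)"
    by (metis mult_minus1 power_mult_distrib)
  moreover have "(-1::real)^n * (-1)^n = 1" by (simp flip: power_mult_distrib)
  ultimately show ?thesis unfolding gchoose_neg
    by (metis (no_types, lifting) mult.assoc mult.commute mult.left_commute mult_1)
qed

lemma gchoose_nonneg: assumes "(a::real) > 0" shows "((a + real n - 1) gchoose n) \<ge> 0"
proof -
  have "((a + real n - 1) gchoose n) = pochhammer a n / fact n"
    by (simp add: gbinomial_pochhammer')
  then show ?thesis using pochhammer_pos[OF assms, of n] by simp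
qed

context PS begin

definition "bb m = ((\<alpha> + real m - 1) gchoose m) / z1^m"

lemma bb_nonneg: "bb m \<ge> 0" using gchoose_nonneg[OF \<alpha>] z1_pos by (simp add: bb_def)

lemma bb_sums:
  assumes "0 \<le> x" "x < z1"
  shows "(\<lambda>m. bb m * x^m) sums (1 - x/z1) powr (-\<alpha>)"
proof -
  have "(\<lambda>n. ((-\<alpha>) gchoose n) * (-((1/z1)*x))^n) sums (1 + -((1/z1)*x)) powr (-\<alpha>)"
    by (rule gen_binomial_real) (use assms z1_pos in simp)
  then show ?thesis unfolding gen_term by (simp add: bb_def power_divide)
qed

lemma term_id:
  assumes "i \<le> n"
  shows "bb (n-i) * (z1^n * (real n + 1) powr e) = z1^i * ((((\<alpha> + real (n-i) - 1) gchoose (n-i)) * (real (n-i) + 1) powr e) * ((real n+1)/(real (n-i)+1)) powr e)"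
proof -
  have z: "z1^n = z1^i * z1^(n-i)" using assms by (simp flip: power_add)
  have "(real (n-i) + 1) powr e * ((real n+1)/(real (n-i)+1)) powr e = ((real (n-i) + 1) * ((real n+1)/(real (n-i)+1))) powr e"
    by (rule powr_mult[symmetric])
  also have "(real (n-i) + 1) * ((real n+1)/(real (n-i)+1)) = real n + 1" by (simp add: field_simps)
  finally have P: "(real (n-i) + 1) powr e * ((real n+1)/(real (n-i)+1)) powr e = (real n + 1) powr e" .
  show ?thesis unfolding bb_def z using z1_pos P by (simp add: field_simps)
qed

lemma main_coeff:
  fixes N X :: "nat pmf"
  assumes "\<And>n. pmf N n = nbin \<alpha> p n"
    and "\<And>n. pmf X n = nbin \<beta> q n"
  shows "(\<lambda>n. pmf (random_sum_pmf N X) n * z1^n * (real n + 1) powr (1-\<alpha>))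
           \<longlonglongrightarrow> p powr \<alpha> * F1 powr (-\<alpha>) / Gamma \<alpha>"
proof -
  obtain R where R: "z1 < R" "ball 0 R \<subseteq> U" "\<And>z. z \<in> ball 0 R \<Longrightarrow> Fz z \<notin> \<real>\<^sub>\<le>\<^sub>0"
    using exists_R by blast
  have holo: "Phi holomorphic_on ball 0 R" by (rule Phi_holo[OF R(2,3)])
  define \<phi> where "\<phi> n = (deriv ^^ n) Phi 0 / fact n" for n
  have ser: "(\<lambda>n. \<phi> n * w^n) sums Phi w" if "w \<in> ball 0 R" for w
    using holomorphic_power_series[OF holo that] by (simp add: \<phi>_def)
  define r where "r = (z1 + R)/2"
  have r: "z1 < r" "r < R" using R(1) by (auto simp: r_def)
  have "summable (\<lambda>n. \<phi> n * complex_of_real r ^ n)"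
    using ser[of "complex_of_real r"] r z1_pos by (auto intro: sums_summable)
  then have "Bseq (\<lambda>n. \<phi> n * complex_of_real r ^ n)"
    by (rule convergent_imp_Bseq[OF convergentI[OF summable_LIMSEQ_zero]])
  then obtain M where M: "M > 0" "\<And>n. norm (\<phi> n * complex_of_real r ^ n) \<le> M"
    by (elim BseqE) blast
  have rpos: "r > 0" using r z1_pos by simp
  have phib: "norm (\<phi> n) \<le> M * (1/r)^n" for n
  proof -
    have "norm (\<phi> n) * r^n \<le> M" using M(2)[of n] rpos by (simp add: norm_mult norm_power)
    then show ?thesis using rpos by (simp add: field_simps)
  qed
  define e where "e n = (\<Sum>i\<le>n. \<phi> i * complex_of_real (bb (n - i)))" for n
  have coeff: "complex_of_real (pmf (random_sum_pmf N X) n) = complex_of_real (p powr \<alpha>) * e n" for n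
  proof -
    have "(\<lambda>n. (complex_of_real (pmf (random_sum_pmf N X) n) - complex_of_real (p powr \<alpha>) * e n) * complex_of_real x ^ n) sums 0"
      if x: "0 < x" "x < 1" for x
    proof -
      have x1: "0 \<le> x" "x < z1" using x z1_gt1 by auto
      have "(\<lambda>n. pmf (random_sum_pmf N X) n * x^n) sums
          (p powr \<alpha> * (1 - (1-p) * (q powr \<beta> * (1-(1-q)*x) powr (-\<beta>))) powr (-\<alpha>))"
        by (rule L_gf[OF \<alpha> \<beta> p q assms]) (use x in auto)
      moreover have "1 - (1-p) * (q powr \<beta> * (1-(1-q)*x) powr (-\<beta>)) = Dr x"
        by (simp add: Dr_def k_def mult_ac)
      ultimately have S: "(\<lambda>n. pmf (random_sum_pmf N X) n * x^n) sums (p powr \<alpha> * Dr x powr (-\<alpha>))"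
        by simp
      have A: "(\<lambda>n. complex_of_real (pmf (random_sum_pmf N X) n) * complex_of_real x^n) sums
          complex_of_real (p powr \<alpha> * Dr x powr (-\<alpha>))"
        using sums_of_real[OF S] by simp
      have s1: "summable (\<lambda>i. norm (\<phi> i * complex_of_real x ^ i))"
      proof (rule summable_comparison_test)
        show "summable (\<lambda>i. M * (x/r)^i)" using x rpos r z1_gt1 by simp
        show "\<exists>N. \<forall>n\<ge>N. norm (norm (\<phi> n * complex_of_real x ^ n)) \<le> M * (x / r) ^ n"
        proof (intro exI allI impI)
          fix n :: nat
          have "norm (\<phi> n * complex_of_real x ^ n) = norm (\<phi> n) * x^n"
            using x by (simp add: norm_mult norm_power)
          also have "\<dots> \<le> M * (1/r)^n * x^n" using phib x by (intro mult_right_mono) auto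
          finally show "norm (norm (\<phi> n * complex_of_real x ^ n)) \<le> M * (x / r) ^ n"
            by (simp add: power_divide)
        qed
      qed
      have bs: "(\<lambda>m. bb m * x^m) sums (1 - x/z1) powr (-\<alpha>)" by (rule bb_sums[OF x1])
      have eq: "norm (complex_of_real (bb j * x^j)) = bb j * x^j" for j
        using bb_nonneg[of j] x by (simp only: norm_of_real) simp
      have s2: "summable (\<lambda>j. norm (complex_of_real (bb j * x^j)))"
        unfolding eq by (rule sums_summable[OF bs])
      have "(\<lambda>n. \<Sum>i\<le>n. (\<phi> i * complex_of_real x ^ i) * complex_of_real (bb (n-i) * x^(n-i))) sums
              ((\<Sum>i. \<phi> i * complex_of_real x ^ i) * (\<Sum>j. complex_of_real (bb j * x^j)))"
        by (rule Cauchy_product_sums[OF s1 s2])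
      moreover have "(\<Sum>i. \<phi> i * complex_of_real x ^ i) = Phi (complex_of_real x)"
        using ser[of "complex_of_real x"] x r z1_gt1 by (simp add: sums_iff)
      moreover have "(\<Sum>j. complex_of_real (bb j * x^j)) = complex_of_real ((1 - x/z1) powr (-\<alpha>))"
        by (rule sums_unique[OF sums_of_real[OF bs], symmetric])
      moreover have "(\<Sum>i\<le>n. (\<phi> i * complex_of_real x ^ i) * complex_of_real (bb (n-i) * x^(n-i))) = e n * complex_of_real x ^ n" for n
        unfolding e_def sum_distrib_right
      proof (rule sum.cong[OF refl])
        fix i assume "i \<in> {..n}"
        then have "x^i * x^(n-i) = x^n" by (simp flip: power_add)
        then have "complex_of_real x ^ i * complex_of_real x ^ (n-i) = complex_of_real x ^ n"
          by (metis of_real_mult of_real_power)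
        then show "\<phi> i * complex_of_real x ^ i * complex_of_real (bb (n - i) * x ^ (n - i)) =
           \<phi> i * complex_of_real (bb (n - i)) * complex_of_real x ^ n"
          by (simp add: mult_ac flip: of_real_mult of_real_power)
      qed
      ultimately have B: "(\<lambda>n. e n * complex_of_real x ^ n) sums
          (Phi (complex_of_real x) * complex_of_real ((1 - x/z1) powr (-\<alpha>)))" by simp
      have "Phi (complex_of_real x) * complex_of_real ((1 - x/z1) powr (-\<alpha>)) = complex_of_real (Dr x powr (-\<alpha>))"
      proof -
        have "(Dr x / (1 - x/z1)) powr (-\<alpha>) * (1 - x/z1) powr (-\<alpha>) = (Dr x / (1 - x/z1) * (1 - x/z1)) powr (-\<alpha>)"
          using Dr_pos[OF x1] x1 z1_pos by (subst powr_mult) (auto simp: field_simps)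
        also have "Dr x / (1 - x/z1) * (1 - x/z1) = Dr x" using x1 z1_pos by (simp add: field_simps)
        finally show ?thesis unfolding Phi_real[OF x1] by (simp flip: of_real_mult)
      qed
      with B have "(\<lambda>n. complex_of_real (p powr \<alpha>) * (e n * complex_of_real x ^ n)) sums
          (complex_of_real (p powr \<alpha>) * complex_of_real (Dr x powr (-\<alpha>)))"
        by (intro sums_mult) simp
      from sums_diff[OF A this] show ?thesis by (simp add: algebra_simps flip: of_real_mult)
    qed
    then have "complex_of_real (pmf (random_sum_pmf N X) n) - complex_of_real (p powr \<alpha>) * e n = 0"
      by (intro powser_unique_real[of 1]) auto
    then show ?thesis by simp
  qed
  define bt where "bt m = ((\<alpha> + real m - 1) gchoose m) * (real m + 1) powr (1-\<alpha>)" for m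
  have btl: "bt \<longlonglongrightarrow> 1 / Gamma \<alpha>" unfolding bt_def by (rule gb_asym[OF \<alpha>])
  define \<psi> where "\<psi> i = \<phi> i * complex_of_real z1 ^ i" for i
  have psib: "norm (\<psi> i) \<le> M * (z1/r)^i" for i
  proof -
    have "norm (\<psi> i) = norm (\<phi> i) * z1^i" using z1_pos by (simp add: \<psi>_def norm_mult norm_power)
    also have "\<dots> \<le> M * (1/r)^i * z1^i" using phib z1_pos by (intro mult_right_mono) auto
    finally show ?thesis by (simp add: power_divide)
  qed
  have th: "0 < z1/r" "z1/r < 1" using r z1_pos rpos by auto
  have CA: "(\<lambda>n. \<Sum>i\<le>n. \<psi> i * complex_of_real (bt (n-i) * ((real n + 1)/(real (n-i) + 1)) powr (1-\<alpha>)))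
           \<longlonglongrightarrow> (\<Sum>i. \<psi> i) * complex_of_real (1 / Gamma \<alpha>)"
    by (rule conv_asym[OF btl psib th])
  have "(\<Sum>i. \<psi> i) = Phi (complex_of_real z1)"
    using ser[of "complex_of_real z1"] R(1) z1_pos by (simp add: sums_iff \<psi>_def)
  then have CA': "(\<lambda>n. \<Sum>i\<le>n. \<psi> i * complex_of_real (bt (n-i) * ((real n + 1)/(real (n-i) + 1)) powr (1-\<alpha>)))
           \<longlonglongrightarrow> complex_of_real (F1 powr (-\<alpha>) / Gamma \<alpha>)"
    using CA by (simp add: Phi_z1)
  have eqn: "complex_of_real (pmf (random_sum_pmf N X) n * z1^n * (real n + 1) powr (1-\<alpha>)) =
     complex_of_real (p powr \<alpha>) * (\<Sum>i\<le>n. \<psi> i * complex_of_real (bt (n-i) * ((real n + 1)/(real (n-i) + 1)) powr (1-\<alpha>)))" for n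
  proof -
    have "complex_of_real (pmf (random_sum_pmf N X) n * z1^n * (real n + 1) powr (1-\<alpha>)) =
        complex_of_real (p powr \<alpha>) * (e n * complex_of_real (z1^n * (real n + 1) powr (1-\<alpha>)))"
      using coeff[of n] by (simp add: mult_ac)
    also have "e n * complex_of_real (z1^n * (real n + 1) powr (1-\<alpha>)) =
       (\<Sum>i\<le>n. \<psi> i * complex_of_real (bt (n-i) * ((real n + 1)/(real (n-i) + 1)) powr (1-\<alpha>)))"
      unfolding e_def sum_distrib_right
    proof (rule sum.cong[OF refl])
      fix i assume "i \<in> {..n}"
      then have "bb (n-i) * (z1^n * (real n + 1) powr (1-\<alpha>)) = z1^i * (bt (n-i) * ((real n+1)/(real (n-i)+1)) powr (1-\<alpha>))"
        unfolding bt_def by (intro term_id) auto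
      then have "complex_of_real (bb (n-i)) * complex_of_real (z1^n * (real n + 1) powr (1-\<alpha>)) =
                 complex_of_real z1 ^ i * complex_of_real (bt (n-i) * ((real n+1)/(real (n-i)+1)) powr (1-\<alpha>))"
        by (metis of_real_mult of_real_power)
      then show "\<phi> i * complex_of_real (bb (n - i)) * complex_of_real (z1 ^ n * (real n + 1) powr (1 - \<alpha>)) =
         \<psi> i * complex_of_real (bt (n - i) * ((real n + 1) / (real (n - i) + 1)) powr (1 - \<alpha>))"
        by (simp add: \<psi>_def mult.assoc)
    qed
    finally show ?thesis .
  qed
  have "(\<lambda>n. complex_of_real (pmf (random_sum_pmf N X) n * z1^n * (real n + 1) powr (1-\<alpha>)))
        \<longlonglongrightarrow> complex_of_real (p powr \<alpha>) * complex_of_real (F1 powr (-\<alpha>) / Gamma \<alpha>)"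
    unfolding eqn by (intro tendsto_intros CA')
  then have "(\<lambda>n. complex_of_real (pmf (random_sum_pmf N X) n * z1^n * (real n + 1) powr (1-\<alpha>)))
        \<longlonglongrightarrow> complex_of_real (p powr \<alpha> * F1 powr (-\<alpha>) / Gamma \<alpha>)"
    by (simp flip: of_real_mult)
  then show ?thesis by (simp only: tendsto_of_real_iff)
qed

lemma const_eq:
  "p powr \<alpha> * F1 powr (-\<alpha>) / Gamma \<alpha> =
   (p * q) powr \<alpha> * (1 - p) powr (\<alpha> / \<beta>)
            / (Gamma \<alpha> * \<beta> powr \<alpha> * (1 - q * (1 - p) powr (1 / \<beta>)) powr \<alpha>)"
proof -
  have F1': "F1 = \<beta> * (1-c) / c" using q c_pos by (simp add: F1_def z1_def field_simps)
  have c1: "0 < 1 - c" using c_lt_q q by simp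
  have "F1 powr (-\<alpha>) = c powr \<alpha> / (\<beta> powr \<alpha> * (1-c) powr \<alpha>)"
  proof -
    have a: "(\<beta> * (1-c)) powr \<alpha> = \<beta> powr \<alpha> * (1-c) powr \<alpha>" by (rule powr_mult)
    have b: "(\<beta> * (1-c) / c) powr \<alpha> = (\<beta> * (1-c)) powr \<alpha> / c powr \<alpha>" by (rule powr_divide)
    show ?thesis unfolding F1' powr_minus b a using c_pos c1 \<beta> by (simp add: field_simps)
  qed
  moreover have "c powr \<alpha> = q powr \<alpha> * (1-p) powr (\<alpha>/\<beta>)"
    unfolding c_def using p q \<beta> by (simp add: powr_mult powr_powr)
  moreover have "(p * q) powr \<alpha> = p powr \<alpha> * q powr \<alpha>" using p q by (simp add: powr_mult)
  ultimately show ?thesis by (simp add: c_def field_simps)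
qed

end

theorem proposition1:
  fixes \<alpha> \<beta> p q :: real and N X :: "nat pmf"
  assumes "\<alpha> > 0" and "\<beta> > 0"
    and "0 < p" and "p < 1" and "0 < q" and "q < 1"
    and "\<And>n. pmf N n = nbin \<alpha> p n"
    and "\<And>n. pmf X n = nbin \<beta> q n"
  shows "(\<lambda>n. pmf (random_sum_pmf N X) n) \<sim>[at_top]
    (\<lambda>n. ((p * q) powr \<alpha> * (1 - p) powr (\<alpha> / \<beta>)
            / (Gamma \<alpha> * \<beta> powr \<alpha> * (1 - q * (1 - p) powr (1 / \<beta>)) powr \<alpha>))
          * ((1 - q * (1 - p) powr (1 / \<beta>)) / (1 - q)) powr (- real n)
          * real n powr (\<alpha> - 1))"
proof -
  interpret PS \<alpha> \<beta> p q by unfold_locales (use assms in auto)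
  define K where "K = (p * q) powr \<alpha> * (1 - p) powr (\<alpha> / \<beta>)
            / (Gamma \<alpha> * \<beta> powr \<alpha> * (1 - q * (1 - p) powr (1 / \<beta>)) powr \<alpha>)"
  have zz: "(1 - q * (1 - p) powr (1 / \<beta>)) / (1 - q) = z1" by (simp add: z1_def c_def)
  have Kpos: "K > 0" unfolding K_def const_eq[symmetric] using F1_pos assms by simp
  have lim: "(\<lambda>n. pmf (random_sum_pmf N X) n * z1^n * (real n + 1) powr (1-\<alpha>)) \<longlonglongrightarrow> K"
    using main_coeff[OF assms(7,8)] by (simp add: K_def const_eq)
  have lim2: "(\<lambda>n. ((real n + 1) / real n) powr (\<alpha> - 1)) \<longlonglongrightarrow> 1" by real_asymp
  have "(\<lambda>n. (pmf (random_sum_pmf N X) n * z1^n * (real n + 1) powr (1-\<alpha>)) / K * ((real n + 1) / real n) powr (\<alpha> - 1))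
     \<longlonglongrightarrow> K / K * 1"
    by (intro tendsto_intros lim lim2) (use Kpos in simp)
  then have L: "(\<lambda>n. (pmf (random_sum_pmf N X) n * z1^n * (real n + 1) powr (1-\<alpha>)) / K * ((real n + 1) / real n) powr (\<alpha> - 1))
     \<longlonglongrightarrow> 1" using Kpos by simp
  show ?thesis unfolding zz K_def[symmetric]
  proof (rule asymp_equivI')
    show "((\<lambda>n. pmf (random_sum_pmf N X) n / (K * z1 powr (- real n) * real n powr (\<alpha> - 1))) \<longlongrightarrow> 1) at_top"
    proof (rule Lim_transform_eventually[OF L])
      show "\<forall>\<^sub>F n in sequentially. (pmf (random_sum_pmf N X) n * z1^n * (real n + 1) powr (1-\<alpha>)) / K * ((real n + 1) / real n) powr (\<alpha> - 1) =
           pmf (random_sum_pmf N X) n / (K * z1 powr (- real n) * real n powr (\<alpha> - 1))"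
        using eventually_gt_at_top[of "0::nat"]
      proof eventually_elim
        case (elim n)
        have e1: "z1 powr (- real n) = 1 / z1^n" using z1_pos by (simp add: powr_minus powr_realpow divide_inverse)
        have e2: "((real n + 1) / real n) powr (\<alpha> - 1) = (real n + 1) powr (\<alpha> - 1) / real n powr (\<alpha> - 1)"
          by (rule powr_divide)
        have e3: "(real n + 1) powr (1-\<alpha>) * (real n + 1) powr (\<alpha> - 1) = 1"
          by (simp flip: powr_add)
        have "real n powr (\<alpha> - 1) > 0" using elim by simp
        then show ?case unfolding e1 e2 using Kpos z1_pos e3
          by (simp add: field_simps)
      qed
    qed
  qed
qed

end
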